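(* Let $q$ be a prime power and let $\mathcal{C}_{\mathsf{out}}$ be an $[n_{\mathsf{out}},k_{\mathsf{out}}]$ linear code over $\mathbb{F}_q$ with generator matrix $\mathbf{G}_{\mathsf{out}}\in\mathbb{F}_q^{k_{\mathsf{out}}\times n_{\mathsf{out}}}$, and let $\mathbb{I}_{\mathsf{out}}$ be the set of its information sets. Let $k_{\mathsf{in}}\leq k_{\mathsf{out}}\leq s$, let $\mathbf{g}\in\mathbb{F}_{q^s}^{k_{\mathsf{out}}}$ have entries linearly independent over $\mathbb{F}_q$, and let $\mathbf{G}_{\mathsf{in}}$ be the generator matrix of the Gabidulin code $\mathcal{C}_{\mathsf{in}}=\mathsf{Gab}(k_{\mathsf{out}},k_{\mathsf{in}},\mathbf{g})$ over $\mathbb{F}_{q^s}$. Then for every $\mathcal{I}\in\mathbb{I}_{\mathsf{out}}$, the code obtained from the row span of $\mathbf{G}_{\mathsf{in}}\cdot\mathbf{G}_{\mathsf{out}}$ by restricting every codeword to the positions in $\mathcal{I}$ is a Gabidulin code $\mathsf{Gab}(k_{\mathsf{out}},k_{\mathsf{in}},\mathbf{g}')$ over $\mathbb{F}_{q^s}$ for some $\mathbf{g}'\in\mathbb{F}_{q^s}^{k_{\mathsf{out}}}$ with entries linearly independent over $\mathbb{F}_q$.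
   Context: An information set of an $[N,k]$ linear code $\mathcal{C}$ is a set $\mathcal{I}\subseteq[N]$ with $|\mathcal{I}|=k$ such that the restriction of $\mathcal{C}$ to the coordinates in $\mathcal{I}$ has dimension $k$. Gabidulin code: for $\mathbf{g}=(g_1,\dots,g_N)\in\mathbb{F}_{q^s}^N$ with $g_i$ linearly independent over $\mathbb{F}_q$, $\mathsf{Gab}(N,k,\mathbf{g})$ is the $[N,k]$ code over $\mathbb{F}_{q^s}$ spanned by the rows of the $k\times N$ matrix whose $(i,j)$ entry is $g_j^{q^{i-1}}$ (this matrix is called its generator matrix). *)

theory Defs
  imports Main
begin

text \<open>The big field F_{q^s} is a finite field type 'a; the small field F_q is
a subfield K of it with card K = q. A vector of length N is a function nat => 'a that is
zero at coordinates >= N. A k x N matrix is a function nat => nat => 'a (row, column),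
with indices starting at 0.\<close>

definition is_subfield :: "'a::field set \<Rightarrow> bool" where
  "is_subfield K \<longleftrightarrow> 0 \<in> K \<and> 1 \<in> K \<and>
     (\<forall>x\<in>K. \<forall>y\<in>K. x + y \<in> K \<and> x * y \<in> K) \<and>
     (\<forall>x\<in>K. - x \<in> K \<and> inverse x \<in> K)"

definition elems_lin_indep :: "'a::field set \<Rightarrow> nat \<Rightarrow> (nat \<Rightarrow> 'a) \<Rightarrow> bool" where
  "elems_lin_indep F m g \<longleftrightarrow>
     (\<forall>c. (\<forall>i<m. c i \<in> F) \<and> (\<Sum>i<m. c i * g i) = 0 \<longrightarrow> (\<forall>i<m. c i = 0))"

definition vecs_lin_indep :: "'a::field set \<Rightarrow> nat \<Rightarrow> nat \<Rightarrow> (nat \<Rightarrow> nat \<Rightarrow> 'a) \<Rightarrow> bool" where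
  "vecs_lin_indep F m N v \<longleftrightarrow>
     (\<forall>c. (\<forall>i<m. c i \<in> F) \<and> (\<forall>j<N. (\<Sum>i<m. c i * v i j) = 0) \<longrightarrow> (\<forall>i<m. c i = 0))"

definition row_span :: "'a::field set \<Rightarrow> nat \<Rightarrow> nat \<Rightarrow> (nat \<Rightarrow> nat \<Rightarrow> 'a) \<Rightarrow> (nat \<Rightarrow> 'a) set" where
  "row_span F k N G =
     {(\<lambda>j. if j < N then (\<Sum>i<k. m i * G i j) else 0) | m. \<forall>i<k. m i \<in> F}"

definition dim_over :: "'a::field set \<Rightarrow> nat \<Rightarrow> (nat \<Rightarrow> 'a) set \<Rightarrow> nat" where
  "dim_over F N C = Max {m. \<exists>v. (\<forall>i<m. v i \<in> C) \<and> vecs_lin_indep F m N v}"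

definition restrict_vec :: "nat set \<Rightarrow> (nat \<Rightarrow> 'a::zero) \<Rightarrow> nat \<Rightarrow> 'a" where
  "restrict_vec I v = (\<lambda>j. if j < card I then v (sorted_list_of_set I ! j) else 0)"

definition restrict_code :: "nat set \<Rightarrow> (nat \<Rightarrow> 'a::zero) set \<Rightarrow> (nat \<Rightarrow> 'a) set" where
  "restrict_code I C = restrict_vec I ` C"

definition info_set :: "'a::field set \<Rightarrow> nat \<Rightarrow> nat \<Rightarrow> (nat \<Rightarrow> 'a) set \<Rightarrow> nat set \<Rightarrow> bool" where
  "info_set F N k C I \<longleftrightarrow> I \<subseteq> {..<N} \<and> card I = k \<and> dim_over F k (restrict_code I C) = k"

definition gab_gen :: "nat \<Rightarrow> (nat \<Rightarrow> 'a::field) \<Rightarrow> nat \<Rightarrow> nat \<Rightarrow> 'a" where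
  "gab_gen q g = (\<lambda>i j. g j ^ (q ^ i))"

definition gab_code :: "nat \<Rightarrow> nat \<Rightarrow> nat \<Rightarrow> (nat \<Rightarrow> 'a::field) \<Rightarrow> (nat \<Rightarrow> 'a) set" where
  "gab_code q N k g = row_span UNIV k N (gab_gen q g)"

definition mat_mult :: "nat \<Rightarrow> (nat \<Rightarrow> nat \<Rightarrow> 'a::comm_ring_1) \<Rightarrow> (nat \<Rightarrow> nat \<Rightarrow> 'a) \<Rightarrow> nat \<Rightarrow> nat \<Rightarrow> 'a" where
  "mat_mult m A B = (\<lambda>i j. \<Sum>l<m. A i l * B l j)"

end

theory Submission imports Defs "HOL-Library.FuncSet" "HOL-Computational_Algebra.Primes"
begin

lemma subfield_sum:
  assumes "is_subfield K" "\<And>i. i \<in> A \<Longrightarrow> f i \<in> K"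
  shows "sum f A \<in> K"
  using assms(2)
proof (induction A rule: infinite_finite_induct)
  case (infinite A) then show ?case using assms(1) by (simp add: is_subfield_def)
next
  case empty then show ?case using assms(1) by (simp add: is_subfield_def)
next
  case (insert x F) then show ?case using assms(1) by (simp add: is_subfield_def)
qed

lemma subfield_ofnat: "is_subfield K \<Longrightarrow> of_nat n \<in> K"
  by (induction n) (auto simp: is_subfield_def)

lemma prime_char: "prime CHAR('a::{finite,field})"
  by (rule prime_CHAR_semidom[OF finite_imp_CHAR_pos[OF finite_UNIV]])

lemma addsub_mult:
  fixes H :: "'a::field set"
  assumes "0 \<in> H" "\<forall>x\<in>H. \<forall>y\<in>H. x + y \<in> H" "h \<in> H"
  shows "of_nat n * h \<in> H"
  using assms by (induction n) (auto simp: distrib_right)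

lemma ofnat_neg: "- (y::'a::{finite,field}) = of_nat (CHAR('a) - 1) * y"
proof -
  have "CHAR('a) > 0" using prime_char[where 'a='a] prime_gt_0_nat by blast
  then have "of_nat (CHAR('a) - 1) + (1::'a) = 0"
    by (metis Suc_diff_1 of_nat_CHAR of_nat_Suc add.commute)
  then have "of_nat (CHAR('a) - 1) = (-1::'a)" by (simp add: eq_neg_iff_add_eq_0)
  then show ?thesis by simp
qed

lemma card_P: "card (range (of_nat :: nat \<Rightarrow> 'a::{finite,field})) = CHAR('a)"
proof -
  let ?p = "CHAR('a)"
  have pp: "?p > 0" using prime_char[where 'a='a] prime_gt_0_nat by blast
  have "range (of_nat :: nat \<Rightarrow> 'a) = of_nat ` {..<?p}"
  proof
    show "range (of_nat :: nat \<Rightarrow> 'a) \<subseteq> of_nat ` {..<?p}"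
    proof
      fix y assume "y \<in> range (of_nat :: nat \<Rightarrow> 'a)"
      then obtain n where y: "y = of_nat n" by auto
      have "n = n mod ?p + ?p * (n div ?p)" by simp
      then have "(of_nat n :: 'a) = of_nat (n mod ?p)"
        by (metis add.right_neutral mult_zero_left of_nat_CHAR of_nat_add of_nat_mult)
      then show "y \<in> of_nat ` {..<?p}" using y pp by auto
    qed
  qed auto
  moreover have "inj_on (of_nat :: nat \<Rightarrow> 'a) {..<?p}"
  proof
    fix a b assume ab: "a \<in> {..<?p}" "b \<in> {..<?p}" "(of_nat a :: 'a) = of_nat b"
    show "a = b"
    proof (rule ccontr)
      assume "a \<noteq> b"
      then consider "a < b" | "b < a" by linarith
      then show False
      proof cases
        case 1
        then have "?p dvd (b - a)" using ab of_nat_eq_iff_char_dvd by blast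
        then show False using 1 ab by (auto dest: dvd_imp_le)
      next
        case 2
        then have "?p dvd (a - b)" using ab of_nat_eq_iff_char_dvd by metis
        then show False using 2 ab by (auto dest: dvd_imp_le)
      qed
    qed
  qed
  ultimately show ?thesis by (simp add: card_image)
qed

lemma P_inv:
  assumes "c \<in> range (of_nat :: nat \<Rightarrow> 'a::{finite,field})" "c \<noteq> 0"
  shows "\<exists>e. c * of_nat e = 1"
proof -
  let ?P = "range (of_nat :: nat \<Rightarrow> 'a)"
  have "(\<lambda>y. c * y) ` ?P \<subseteq> ?P" using assms(1) by (auto simp flip: of_nat_mult)
  moreover have "inj_on (\<lambda>y. c * y) ?P" using assms(2) by (auto intro: inj_onI)
  ultimately have "(\<lambda>y. c * y) ` ?P = ?P" by (intro endo_inj_surj) auto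
  moreover have "1 \<in> ?P" by (metis of_nat_1 rangeI)
  ultimately show ?thesis by (metis (no_types, lifting) image_iff rangeE)
qed

lemma grow:
  fixes K H :: "'a::{finite,field} set"
  assumes K: "is_subfield K" and HK: "H \<subseteq> K" and H0: "0 \<in> H"
    and Hadd: "\<forall>x\<in>H. \<forall>y\<in>H. x + y \<in> H" and x: "x \<in> K" "x \<notin> H"
  defines "H' \<equiv> (\<lambda>(h,c). h + c * x) ` (H \<times> range (of_nat :: nat \<Rightarrow> 'a))"
  shows "H' \<subseteq> K \<and> 0 \<in> H' \<and> (\<forall>x\<in>H'. \<forall>y\<in>H'. x + y \<in> H') \<and> card H' = card H * CHAR('a)"
proof (intro conjI)
  let ?P = "range (of_nat :: nat \<Rightarrow> 'a)"
  have mem: "h + of_nat n * x \<in> H'" if "h \<in> H" for h n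
  proof -
    have "(h, of_nat n) \<in> H \<times> ?P" using that by simp
    then show ?thesis unfolding H'_def by (rule rev_image_eqI) simp
  qed
  have dest: "\<exists>h n. h \<in> H \<and> y = h + of_nat n * x" if "y \<in> H'" for y
    using that unfolding H'_def by auto
  show "H' \<subseteq> K"
  proof
    fix y assume "y \<in> H'"
    then obtain h n where hn: "h \<in> H" "y = h + of_nat n * x" using dest by blast
    have "h \<in> K" using hn HK by blast
    moreover have "of_nat n * x \<in> K" using K x subfield_ofnat[OF K, of n] unfolding is_subfield_def by blast
    ultimately show "y \<in> K" using hn K unfolding is_subfield_def by blast
  qed
  show "0 \<in> H'" using mem[OF H0, of 0] by simp
  show "\<forall>a\<in>H'. \<forall>b\<in>H'. a + b \<in> H'"
  proof (intro ballI)
    fix a b assume "a \<in> H'" "b \<in> H'"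
    then obtain h n h' n' where "h \<in> H" "h' \<in> H" "a = h + of_nat n * x" "b = h' + of_nat n' * x"
      using dest by meson
    moreover have "h + of_nat n * x + (h' + of_nat n' * x) = (h + h') + of_nat (n + n') * x"
      by (simp add: algebra_simps)
    moreover have "h + h' \<in> H" using Hadd calculation by blast
    ultimately show "a + b \<in> H'" using mem by metis
  qed
  have inj: "inj_on (\<lambda>(h,c). h + c * x) (H \<times> ?P)"
  proof (rule inj_onI, clarify)
    fix h c h' c' assume h: "h \<in> H" "h' \<in> H" and eq: "h + of_nat c * x = h' + of_nat c' * x"
    show "h = h' \<and> (of_nat c :: 'a) = of_nat c'"
    proof (cases "(of_nat c :: 'a) = of_nat c'")
      case True then show ?thesis using eq by simp
    next
      case False
      have "(of_nat c - of_nat c' :: 'a) = of_nat c + - of_nat c'" by simp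
      also have "\<dots> = of_nat c + of_nat (CHAR('a) - 1) * of_nat c'" using ofnat_neg by metis
      also have "\<dots> = of_nat (c + (CHAR('a) - 1) * c')" by simp
      finally have d: "(of_nat c - of_nat c' :: 'a) \<in> ?P" by (metis rangeI)
      obtain e where e: "(of_nat c - of_nat c' :: 'a) * of_nat e = 1"
        using P_inv[OF d] False by auto
      have "-h \<in> H" using ofnat_neg[of h] addsub_mult[OF H0 Hadd h(1)] by metis
      then have "h' + (-h) \<in> H" using Hadd h by blast
      moreover have "h' + (-h) = (of_nat c - of_nat c') * x" using eq by (simp add: algebra_simps)
      ultimately have "of_nat e * ((of_nat c - of_nat c') * x) \<in> H"
        using addsub_mult[OF H0 Hadd, of _ e] by simp
      moreover have "of_nat e * ((of_nat c - of_nat c') * x) = x"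
        using e by (simp add: mult.assoc[symmetric] mult.commute)
      ultimately show ?thesis using x by simp
    qed
  qed
  have "card H' = card (H \<times> ?P)" unfolding H'_def by (rule card_image[OF inj])
  also have "\<dots> = card H * card ?P" by (rule card_cartesian_product)
  finally show "card H' = card H * CHAR('a)" using card_P[where 'a='a] by simp
qed

lemma subfield_card_pow_aux:
  fixes K :: "'a::{finite,field} set"
  assumes K: "is_subfield K"
  shows "\<forall>H r. card K - card H = n \<longrightarrow> H \<subseteq> K \<longrightarrow> 0 \<in> H \<longrightarrow> (\<forall>x\<in>H. \<forall>y\<in>H. x + y \<in> H) \<longrightarrow> card H = CHAR('a) ^ r
     \<longrightarrow> (\<exists>r. card K = CHAR('a) ^ r)"
proof (induction n rule: less_induct)
  case (less n)
  show ?case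
  proof (intro allI impI)
    fix H r assume prems: "card K - card H = n" "H \<subseteq> K" "0 \<in> H" "\<forall>x\<in>H. \<forall>y\<in>H. x + y \<in> H" "card H = CHAR('a) ^ r"
    show "\<exists>r. card K = CHAR('a) ^ r"
    proof (cases "H = K")
      case True then show ?thesis using prems by auto
    next
      case False
      then obtain x where x: "x \<in> K" "x \<notin> H" using prems(2) by blast
      define H' where "H' = (\<lambda>(h,c). h + c * x) ` (H \<times> range (of_nat :: nat \<Rightarrow> 'a))"
      have g: "H' \<subseteq> K \<and> 0 \<in> H' \<and> (\<forall>x\<in>H'. \<forall>y\<in>H'. x + y \<in> H') \<and> card H' = card H * CHAR('a)"
        using grow[OF K prems(2,3,4) x] unfolding H'_def by blast
      have p1: "CHAR('a) > 1" using prime_char[where 'a='a] prime_gt_1_nat by blast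
      have "card H > 0" using prems(3) by (auto simp: card_gt_0_iff)
      then have "card H' > card H" using g p1 by simp
      moreover have "card H' \<le> card K" using g by (intro card_mono) auto
      ultimately have lt: "card K - card H' < n" using prems(1) by linarith
      have pw: "card H' = CHAR('a) ^ Suc r" using g prems(5) by simp
      show ?thesis
        by (rule less[OF lt, rule_format, of H' "Suc r"]) (use g pw in auto)
    qed
  qed
qed

lemma subfield_card_pow:
  fixes K :: "'a::{finite,field} set"
  assumes K: "is_subfield K"
  shows "\<exists>r. card K = CHAR('a) ^ r"
proof -
  have "0 \<in> K" using K by (simp add: is_subfield_def)
  then show ?thesis
    using subfield_card_pow_aux[OF K, where n="card K - card {0::'a}", rule_format, of "{0}" 0] by simp
qed


lemma pow_K:
  fixes K :: "'a::{finite,field} set"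
  assumes K: "is_subfield K" and x: "x \<in> K"
  shows "x ^ card K = x"
proof (cases "x = 0")
  case True
  have "card K > 0" using x by (auto simp: card_gt_0_iff)
  then show ?thesis using True by simp
next
  case False
  have cl: "\<And>a b. a \<in> K \<Longrightarrow> b \<in> K \<Longrightarrow> a * b \<in> K" "\<And>a. a \<in> K \<Longrightarrow> inverse a \<in> K"
    using K unfolding is_subfield_def by auto
  have "(\<Prod>y\<in>K-{0}. x * y) = (\<Prod>y\<in>K-{0}. y)"
    by (rule prod.reindex_bij_witness[of _ "\<lambda>y. y / x" "\<lambda>y. x * y"])
       (use False x cl in \<open>auto simp: divide_inverse\<close>)
  moreover have "(\<Prod>y\<in>K-{0}. x * y) = x ^ card (K - {0}) * (\<Prod>y\<in>K-{0}. y)"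
    by (simp add: prod.distrib)
  moreover have "(\<Prod>y\<in>K-{0}. y) \<noteq> 0" by simp
  ultimately have "x ^ card (K - {0}) = 1" by simp
  moreover have "card K = Suc (card (K - {0}))"
  proof -
    have "0 \<in> K" using K unfolding is_subfield_def by blast
    then have "card (K - {0}) = card K - 1" by (simp add: card_Diff_singleton)
    moreover have "card K > 0" using x by (auto simp: card_gt_0_iff)
    ultimately show ?thesis by simp
  qed
  ultimately show ?thesis by simp
qed

lemma pow_K_iter:
  fixes K :: "'a::{finite,field} set"
  assumes K: "is_subfield K" and x: "x \<in> K"
  shows "x ^ (card K ^ i) = x"
proof (induction i)
  case 0 then show ?case by simp
next
  case (Suc i)
  have "x ^ (card K ^ Suc i) = (x ^ card K) ^ (card K ^ i)"
    by (simp add: power_mult)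
  then show ?case using pow_K[OF K x] Suc by simp
qed

lemma frob:
  fixes K :: "'a::{finite,field} set"
  assumes K: "is_subfield K" and b: "\<forall>l\<in>A. b l \<in> K"
  shows "(\<Sum>l\<in>A. a l * b l) ^ (card K ^ i) = (\<Sum>l\<in>A. a l ^ (card K ^ i) * b l)"
proof -
  obtain r where r: "card K = CHAR('a) ^ r" using subfield_card_pow[OF K] by blast
  have m: "card K ^ i = CHAR('a) ^ (r * i)" using r by (simp add: power_mult)
  have "(\<Sum>l\<in>A. a l * b l) ^ (card K ^ i) = (\<Sum>l\<in>A. (a l * b l) ^ (card K ^ i))"
    by (rule freshmans_dream_sum'[OF prime_char m])
  also have "\<dots> = (\<Sum>l\<in>A. a l ^ (card K ^ i) * b l)"
    by (rule sum.cong) (use b pow_K_iter[OF K] in \<open>auto simp: power_mult_distrib\<close>)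
  finally show ?thesis .
qed

lemma indep_mono:
  assumes "vecs_lin_indep F m N v" "m' \<le> m" "0 \<in> F"
  shows "vecs_lin_indep F m' N v"
  unfolding vecs_lin_indep_def
proof (rule allI, rule impI)
  fix c assume c: "(\<forall>i<m'. c i \<in> F) \<and> (\<forall>j<N. (\<Sum>i<m'. c i * v i j) = 0)"
  define c' where "c' = (\<lambda>i. if i < m' then c i else 0)"
  have "\<And>j. (\<Sum>i<m. c' i * v i j) = (\<Sum>i<m'. c i * v i j)"
  proof -
    fix j
    have "(\<Sum>i<m. c' i * v i j) = (\<Sum>i<m'. c' i * v i j)"
      by (rule sum.mono_neutral_right) (use assms(2) in \<open>auto simp: c'_def\<close>)
    then show "(\<Sum>i<m. c' i * v i j) = (\<Sum>i<m'. c i * v i j)" by (simp add: c'_def)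
  qed
  moreover have "\<forall>i<m. c' i \<in> F" using c assms(3) by (simp add: c'_def)
  ultimately have "(\<forall>i<m. c' i \<in> F) \<and> (\<forall>j<N. (\<Sum>i<m. c' i * v i j) = 0)" using c by simp
  then have "\<forall>i<m. c' i = 0" using assms(1) unfolding vecs_lin_indep_def by blast
  then show "\<forall>i<m'. c i = 0"
  proof (intro allI impI)
    fix i assume i: "i < m'" and z: "\<forall>i<m. c' i = 0"
    then have "c' i = 0" using assms(2) by simp
    then show "c i = 0" using i by (simp add: c'_def)
  qed
qed

lemma count_dep:
  fixes K :: "'a::{finite,field} set"
  assumes K: "is_subfield K" and j0: "j0 < k" "c j0 \<noteq> 0"
    and v: "\<forall>i<k. (\<forall>j<k. v i j \<in> K) \<and> (\<Sum>j<k. c j * v i j) = 0"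
  shows "\<not> vecs_lin_indep K k k v"
proof
  assume ind: "vecs_lin_indep K k k v"
  let ?A = "{..<k} \<rightarrow>\<^sub>E K"
  let ?S = "{w \<in> {..<k} \<rightarrow>\<^sub>E K. (\<Sum>j<k. c j * w j) = 0}"
  define \<phi> where "\<phi> = (\<lambda>a. restrict (\<lambda>j. \<Sum>i<k. a i * v i j) {..<k})"
  have cl1: "\<And>a b. a \<in> K \<Longrightarrow> b \<in> K \<Longrightarrow> a * b \<in> K"
    using K unfolding is_subfield_def by blast
  have cl2: "a - b \<in> K" if "a \<in> K" "b \<in> K" for a b
  proof -
    have "a + - b \<in> K" using K that unfolding is_subfield_def by blast
    then show ?thesis by simp
  qed
  note cl = cl1 cl2
  have img: "\<phi> ` ?A \<subseteq> ?S"
  proof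
    fix w assume "w \<in> \<phi> ` ?A"
    then obtain a where a: "a \<in> ?A" and w: "w = \<phi> a" by auto
    have "w \<in> {..<k} \<rightarrow>\<^sub>E K"
    proof -
      have aK: "\<And>i. i < k \<Longrightarrow> a i \<in> K" using a by (simp add: PiE_iff)
      show ?thesis unfolding w \<phi>_def using aK v by (auto intro!: subfield_sum[OF K] cl1)
    qed
    moreover have "(\<Sum>j<k. c j * w j) = (\<Sum>i<k. a i * (\<Sum>j<k. c j * v i j))"
      unfolding w \<phi>_def by (simp add: sum_distrib_left sum_distrib_right mult_ac) (rule sum.swap)
    moreover have "\<dots> = 0" using v by simp
    ultimately show "w \<in> ?S" by simp
  qed
  have inj: "inj_on \<phi> ?A"
  proof
    fix a b assume a: "a \<in> ?A" and b: "b \<in> ?A" and eq: "\<phi> a = \<phi> b"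
    have "\<forall>i<k. a i - b i = 0"
    proof -
      have H: "\<And>c. (\<forall>i<k. c i \<in> K) \<and> (\<forall>j<k. (\<Sum>i<k. c i * v i j) = 0) \<Longrightarrow> \<forall>i<k. c i = 0"
        using ind unfolding vecs_lin_indep_def by blast
      have f2: "\<forall>j<k. (\<Sum>i<k. (a i - b i) * v i j) = 0"
      proof (intro allI impI)
        fix j assume j: "j < k"
        have "(\<Sum>i<k. a i * v i j) = (\<Sum>i<k. b i * v i j)"
          using fun_cong[OF eq, of j] j unfolding \<phi>_def by simp
        then show "(\<Sum>i<k. (a i - b i) * v i j) = 0"
          by (simp add: left_diff_distrib sum_subtractf)
      qed
      have f1: "\<forall>i<k. a i - b i \<in> K" using a b by (auto simp: PiE_iff intro!: cl2)
      show ?thesis by (rule H[OF conjI[OF f1 f2]])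
    qed
    then show "a = b" using a b by (intro PiE_ext) auto
  qed
  have finS: "finite ?S" by (rule finite_subset[of _ "{..<k} \<rightarrow>\<^sub>E K"]) (auto intro!: finite_PiE)
  have "card ?A \<le> card ?S" using card_inj_on_le[OF inj img finS] .
  moreover have "card ?A = card K ^ k" by (simp add: card_PiE)
  ultimately have le1: "card K ^ k \<le> card ?S" by simp
  define \<psi> :: "(nat \<Rightarrow> 'a) \<Rightarrow> nat \<Rightarrow> 'a" where "\<psi> = (\<lambda>w. restrict w ({..<k} - {j0}))"
  have img2: "\<psi> ` ?S \<subseteq> ({..<k} - {j0}) \<rightarrow>\<^sub>E K"
  proof (rule image_subsetI)
    fix w assume "w \<in> ?S"
    then have wP: "w \<in> {..<k} \<rightarrow>\<^sub>E K" by blast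
    have "\<forall>j\<in>{..<k} - {j0}. w j \<in> K" using PiE_mem[OF wP] by blast
    then show "\<psi> w \<in> ({..<k} - {j0}) \<rightarrow>\<^sub>E K" unfolding \<psi>_def by (simp only: restrict_PiE_iff)
  qed
  have inj2: "inj_on \<psi> ?S"
  proof
    fix w w' assume w: "w \<in> ?S" and w': "w' \<in> ?S" and eq: "\<psi> w = \<psi> w'"
    have oth: "\<And>j. j \<in> {..<k} - {j0} \<Longrightarrow> w j = w' j"
      using eq unfolding \<psi>_def by (metis restrict_apply')
    have s1: "(\<Sum>j<k. c j * w j) = c j0 * w j0 + (\<Sum>j\<in>{..<k} - {j0}. c j * w j)"
      using j0 by (simp add: sum.remove)
    have s2: "(\<Sum>j<k. c j * w' j) = c j0 * w' j0 + (\<Sum>j\<in>{..<k} - {j0}. c j * w' j)"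
      using j0 by (simp add: sum.remove)
    have se: "(\<Sum>j\<in>{..<k} - {j0}. c j * w j) = (\<Sum>j\<in>{..<k} - {j0}. c j * w' j)"
      by (rule sum.cong) (use oth in auto)
    have z1: "(\<Sum>j<k. c j * w j) = 0" using w by blast
    have z2: "(\<Sum>j<k. c j * w' j) = 0" using w' by blast
    have "c j0 * w j0 + (\<Sum>j\<in>{..<k} - {j0}. c j * w' j) = c j0 * w' j0 + (\<Sum>j\<in>{..<k} - {j0}. c j * w' j)"
      using s1 s2 se z1 z2 by simp
    then have "c j0 * w j0 = c j0 * w' j0" by (rule add_right_imp_eq)
    then have "w j0 = w' j0" using j0 by simp
    then show "w = w'" using w w' oth by (intro PiE_ext[of w "{..<k}" "\<lambda>_. K"]) auto
  qed
  have "card ?S \<le> card (({..<k} - {j0}) \<rightarrow>\<^sub>E K)"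
    by (rule card_inj_on_le[OF inj2 img2]) (intro finite_PiE, auto)
  also have "\<dots> = card K ^ (k - 1)" using j0 by (simp add: card_PiE)
  finally have le2: "card ?S \<le> card K ^ (k - 1)" .
  have "card K \<ge> 2"
  proof -
    have "{0, 1} \<subseteq> K" using K unfolding is_subfield_def by auto
    then have "card {0::'a, 1} \<le> card K" by (intro card_mono) auto
    then show ?thesis by simp
  qed
  moreover have "k - 1 < k" using j0 by simp
  ultimately have "card K ^ (k - 1) < card K ^ k"
    using power_strict_increasing[of "k - 1" k "card K"] by simp
  then show False using le1 le2 by simp
qed


theorem lemma2:
  fixes K :: "'a::{finite,field} set"
    and q s n_out k_out k_in :: nat
    and G_out :: "nat \<Rightarrow> nat \<Rightarrow> 'a"
    and g :: "nat \<Rightarrow> 'a"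
    and I :: "nat set"
  assumes "is_subfield K" and "card K = q" and "card (UNIV :: 'a set) = q ^ s"
    and "\<forall>i<k_out. \<forall>j<n_out. G_out i j \<in> K"
    and "vecs_lin_indep K k_out n_out G_out"
    and "k_in \<le> k_out" and "k_out \<le> s"
    and "elems_lin_indep K k_out g"
    and "info_set K n_out k_out (row_span K k_out n_out G_out) I"
  shows "\<exists>g'. elems_lin_indep K k_out g' \<and>
           restrict_code I (row_span UNIV k_in n_out (mat_mult k_out (gab_gen q g) G_out))
             = gab_code q k_out k_in g'"
proof -
  define \<sigma> where "\<sigma> = (\<lambda>j. sorted_list_of_set I ! j)"
  have I: "I \<subseteq> {..<n_out}" "card I = k_out"
    and dimC: "dim_over K k_out (restrict_code I (row_span K k_out n_out G_out)) = k_out"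
    using assms(9) unfolding info_set_def by auto
  have finI: "finite I" using I(1) finite_subset by blast
  have \<sigma>I: "\<And>j. j < k_out \<Longrightarrow> \<sigma> j \<in> I" unfolding \<sigma>_def using finI I(2)
    by (metis length_sorted_list_of_set nth_mem set_sorted_list_of_set)
  have \<sigma>n: "\<And>j. j < k_out \<Longrightarrow> \<sigma> j < n_out" using \<sigma>I I(1) by auto
  have rv: "\<And>v. restrict_vec I v = (\<lambda>j. if j < k_out then v (\<sigma> j) else 0)"
    unfolding \<sigma>_def by (simp add: restrict_vec_def I(2))
  define g' where "g' = (\<lambda>j. \<Sum>l<k_out. g l * G_out l (\<sigma> j))"
  have Gin: "\<And>l j. l < k_out \<Longrightarrow> j < k_out \<Longrightarrow> G_out l (\<sigma> j) \<in> K"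
    using assms(4) \<sigma>n by auto
  have M: "mat_mult k_out (gab_gen q g) G_out i (\<sigma> j) = g' j ^ (q ^ i)" if j: "j < k_out" for i j
  proof -
    have "g' j ^ (q ^ i) = (\<Sum>l<k_out. g l ^ (q ^ i) * G_out l (\<sigma> j))"
      unfolding g'_def using frob[OF assms(1), of "{..<k_out}" "\<lambda>l. G_out l (\<sigma> j)" g i] Gin j assms(2)
      by simp
    then show ?thesis unfolding mat_mult_def gab_gen_def by simp
  qed
  have eqv: "restrict_vec I (\<lambda>j. if j < n_out then \<Sum>i<k_in. m i * mat_mult k_out (gab_gen q g) G_out i j else 0)
     = (\<lambda>j. if j < k_out then \<Sum>i<k_in. m i * gab_gen q g' i j else 0)" for m
    by (auto simp: rv \<sigma>n M gab_gen_def[of q g'] fun_eq_iff)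
  have eq: "restrict_code I (row_span UNIV k_in n_out (mat_mult k_out (gab_gen q g) G_out))
             = gab_code q k_out k_in g'"
    unfolding restrict_code_def row_span_def gab_code_def
    using eqv by (auto simp: image_iff) (metis eqv)
  have indep: "elems_lin_indep K k_out g'"
    unfolding elems_lin_indep_def
  proof (rule allI, rule impI)
    fix c assume c: "(\<forall>i<k_out. c i \<in> K) \<and> (\<Sum>i<k_out. c i * g' i) = 0"
    show "\<forall>i<k_out. c i = 0"
    proof (rule ccontr)
      assume "\<not> (\<forall>i<k_out. c i = 0)"
      then obtain j0 where j0: "j0 < k_out" "c j0 \<noteq> 0" by auto
      have cl: "\<And>a b. a \<in> K \<Longrightarrow> b \<in> K \<Longrightarrow> a * b \<in> K"
        using assms(1) unfolding is_subfield_def by auto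
      define d where "d = (\<lambda>l. \<Sum>j<k_out. c j * G_out l (\<sigma> j))"
      have dK: "\<forall>l<k_out. d l \<in> K"
        unfolding d_def using c Gin cl by (auto intro!: subfield_sum[OF assms(1)])
      have "(\<Sum>l<k_out. d l * g l) = (\<Sum>i<k_out. c i * g' i)"
        unfolding d_def g'_def by (simp add: sum_distrib_left sum_distrib_right mult_ac) (rule sum.swap)
      then have d0: "\<forall>l<k_out. d l = 0" using assms(8) dK c unfolding elems_lin_indep_def by auto
      let ?C = "restrict_code I (row_span K k_out n_out G_out)"
      have Cprop: "(\<forall>j<k_out. w j \<in> K) \<and> (\<Sum>j<k_out. c j * w j) = 0" if "w \<in> ?C" for w
      proof -
        obtain m where m: "\<forall>i<k_out. m i \<in> K"
          and w: "w = restrict_vec I (\<lambda>j. if j < n_out then \<Sum>i<k_out. m i * G_out i j else 0)"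
          using \<open>w \<in> ?C\<close> unfolding restrict_code_def row_span_def by auto
        have wj: "\<And>j. j < k_out \<Longrightarrow> w j = (\<Sum>i<k_out. m i * G_out i (\<sigma> j))"
          using w \<sigma>n by (simp add: rv)
        have "\<forall>j<k_out. w j \<in> K"
          using wj m Gin cl by (auto intro!: subfield_sum[OF assms(1)])
        moreover have "(\<Sum>j<k_out. c j * w j) = (\<Sum>i<k_out. m i * d i)"
          using wj unfolding d_def
          by (simp add: sum_distrib_left sum_distrib_right mult_ac) (rule sum.swap)
        moreover have "\<dots> = 0" using d0 by simp
        ultimately show ?thesis by simp
      qed
      let ?T = "{m. \<exists>v. (\<forall>i<m. v i \<in> ?C) \<and> vecs_lin_indep K m k_out v}"
      have T: "?T \<subseteq> {..<k_out}"
      proof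
        fix m assume "m \<in> ?T"
        then obtain v where v: "\<forall>i<m. v i \<in> ?C" "vecs_lin_indep K m k_out v" by auto
        show "m \<in> {..<k_out}"
        proof (rule ccontr)
          assume "m \<notin> {..<k_out}"
          then have km: "k_out \<le> m" by simp
          have "vecs_lin_indep K k_out k_out v"
            using indep_mono[OF v(2) km] assms(1) unfolding is_subfield_def by auto
          moreover have "\<not> vecs_lin_indep K k_out k_out v"
            by (rule count_dep[of K j0 k_out c v, OF assms(1) j0]) (use v km Cprop in auto)
          ultimately show False by simp
        qed
      qed
      have "0 \<in> ?T" unfolding vecs_lin_indep_def by auto
      then have "Max ?T \<in> ?T" using T by (intro Max_in) (auto intro: finite_subset)
      then have "Max ?T < k_out" using T by auto
      then show False using dimC unfolding dim_over_def by simp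
    qed
  qed
  show ?thesis using indep eq by blast
qed

end
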